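(* Fix real numbers $\{\Theta_{kj}\}_{k,j\in[K]}$. For $\mathbf{P}\in[0,1]^K$ and $(\boldsymbol{\alpha},\boldsymbol{\gamma})\in[-\pi,\pi)^{2K}$ let $\beta_{kj}=\cos^2(\alpha_j+\Theta_{kj}-\Theta_{jj}-\gamma_k)$ and $R_{sum}(\mathbf{P},\boldsymbol{\alpha},\boldsymbol{\gamma})=\sum_{k=1}^K\ln\!\left(1+\frac{P_k\beta_{kk}}{\sum_{j\ne k}P_j\beta_{kj}+\frac12}\right)$. Let $\mathcal{S}\subset[K]$ with $|\mathcal{S}|=s\ge 1$, and let $(\boldsymbol{\alpha},\boldsymbol{\gamma}),(\boldsymbol{\alpha}',\boldsymbol{\gamma}')\in[-\pi,\pi)^{2K}$ satisfy $\max_{k\in\mathcal{S}}\max(|\alpha_k-\alpha_k'|,|\gamma_k-\gamma_k'|)\le\frac{1}{2s^2}$. Then $$\left|R_{sum}(\mathbf{1}_{\mathcal{S}},\boldsymbol{\alpha},\boldsymbol{\gamma})-R_{sum}(\mathbf{1}_{\mathcal{S}},\boldsymbol{\alpha}',\boldsymbol{\gamma}')\right|\le 4,$$ where $\mathbf{1}_{\mathcal{S}}\in\{0,1\}^K$ has $k$-th component $1$ if $k\in\mathcal{S}$ and $0$ otherwise. *)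

theory Defs
  imports Complex_Main
begin

definition beta :: "(nat \<Rightarrow> nat \<Rightarrow> real) \<Rightarrow> (nat \<Rightarrow> real) \<Rightarrow> (nat \<Rightarrow> real) \<Rightarrow> nat \<Rightarrow> nat \<Rightarrow> real" where
  "beta Theta alpha gamma k j = (cos (alpha j + Theta k j - Theta j j - gamma k))\<^sup>2"

definition R_sum :: "nat \<Rightarrow> (nat \<Rightarrow> nat \<Rightarrow> real) \<Rightarrow> (nat \<Rightarrow> real) \<Rightarrow> (nat \<Rightarrow> real) \<Rightarrow> (nat \<Rightarrow> real) \<Rightarrow> real" where
  "R_sum K Theta P alpha gamma =
     (\<Sum>k\<in>{1..K}. ln (1 + P k * beta Theta alpha gamma k k /
        ((\<Sum>j\<in>{1..K} - {k}. P j * beta Theta alpha gamma k j) + 1/2)))"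

definition indicator_vec :: "nat set \<Rightarrow> nat \<Rightarrow> real" where
  "indicator_vec S k = (if k \<in> S then 1 else 0)"

end

theory Submission
  imports Defs
begin

lemma cos2_id: "(cos x)\<^sup>2 - (cos y)\<^sup>2 = sin (y + x) * sin (y - (x::real))"
proof -
  have "sin(y+x)*sin(y-x) = (sin y)^2*(cos x)^2 - (cos y)^2*(sin x)^2"
    using sin_add[of y x] sin_diff[of y x] unfolding power2_eq_square by algebra
  also have "\<dots> = (cos x)\<^sup>2 - (cos y)\<^sup>2" by (simp add: sin_squared_eq algebra_simps)
  finally show ?thesis by simp
qed

lemma cos2_lip: "\<bar>(cos x)\<^sup>2 - (cos y)\<^sup>2\<bar> \<le> \<bar>x - (y::real)\<bar>"
proof -
  have "\<bar>(cos x)\<^sup>2 - (cos y)\<^sup>2\<bar> = \<bar>sin (y + x)\<bar> * \<bar>sin (y - x)\<bar>"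
    by (simp add: cos2_id abs_mult)
  also have "\<dots> \<le> 1 * \<bar>y - x\<bar>"
    by (rule mult_mono) (auto simp: abs_sin_x_le_abs_x)
  finally show ?thesis by simp
qed

lemma div_aux: "(X - Y) / Y \<le> 2 * \<bar>X - Y\<bar>" if "X \<ge> 1/2" "Y \<ge> (1/2::real)"
proof (cases "X \<ge> Y")
  case True
  have "(X - Y) / Y \<le> (X-Y) / (1/2)" using that True by (intro divide_left_mono) auto
  then show ?thesis using True by simp
next
  case False
  have "(X - Y) / Y \<le> 0" using that False by (simp add: divide_le_0_iff)
  moreover have "0 \<le> 2 * \<bar>X - Y\<bar>" by simp
  ultimately show ?thesis by (rule order_trans)
qed

lemma ln_lip:
  fixes A B :: real
  assumes "A \<ge> 1/2" "B \<ge> 1/2"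
  shows "\<bar>ln A - ln B\<bar> \<le> 2 * \<bar>A - B\<bar>"
proof -
  have h: "ln X - ln Y \<le> 2 * \<bar>X - Y\<bar>" if "X \<ge> 1/2" "Y \<ge> 1/2" for X Y :: real
  proof -
    have "ln X - ln Y = ln (X / Y)" using that by (simp add: ln_div)
    also have "\<dots> \<le> X / Y - 1" using that by (intro ln_le_minus_one) auto
    also have "\<dots> = (X - Y) / Y" using that by (simp add: field_simps)
    also have "\<dots> \<le> 2 * \<bar>X - Y\<bar>" using div_aux that by blast
    finally show ?thesis .
  qed
  show ?thesis using h[OF assms] h[OF assms(2,1)] by (simp add: abs_minus_commute abs_le_iff)
qed

lemma beta_ge0: "beta Th a g k j \<ge> 0" by (simp add: beta_def)

definition Bs :: "nat set \<Rightarrow> (nat \<Rightarrow> nat \<Rightarrow> real) \<Rightarrow> (nat \<Rightarrow> real) \<Rightarrow> (nat \<Rightarrow> real) \<Rightarrow> nat \<Rightarrow> real" where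
  "Bs S Th a g k = (\<Sum>j\<in>S - {k}. beta Th a g k j)"

lemma R_eq:
  assumes "S \<subseteq> {1..K}"
  shows "R_sum K Th (indicator_vec S) a g =
    (\<Sum>k\<in>S. ln (Bs S Th a g k + beta Th a g k k + 1/2) - ln (Bs S Th a g k + 1/2))"
proof -
  have fin: "finite S" using assms finite_subset by blast
  have inner: "(\<Sum>j\<in>{1..K} - {k}. indicator_vec S j * beta Th a g k j) = Bs S Th a g k" for k
    unfolding Bs_def indicator_vec_def
    by (rule sum.mono_neutral_cong_right[of "{1..K}-{k}" "S-{k}"]) (use assms fin in auto)
  have "R_sum K Th (indicator_vec S) a g =
     (\<Sum>k\<in>{1..K}. ln (1 + indicator_vec S k * beta Th a g k k / (Bs S Th a g k + 1/2)))"
    unfolding R_sum_def inner ..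
  also have "\<dots> = (\<Sum>k\<in>S. ln (1 + indicator_vec S k * beta Th a g k k / (Bs S Th a g k + 1/2)))"
    by (rule sum.mono_neutral_right) (use assms fin in \<open>auto simp: indicator_vec_def\<close>)
  also have "\<dots> = (\<Sum>k\<in>S. ln (Bs S Th a g k + beta Th a g k k + 1/2) - ln (Bs S Th a g k + 1/2))"
  proof (rule sum.cong[OF refl])
    fix k assume "k \<in> S"
    have B0: "Bs S Th a g k \<ge> 0" unfolding Bs_def by (rule sum_nonneg) (simp add: beta_ge0)
    have "1 + indicator_vec S k * beta Th a g k k / (Bs S Th a g k + 1/2)
        = (Bs S Th a g k + beta Th a g k k + 1/2) / (Bs S Th a g k + 1/2)"
      using \<open>k \<in> S\<close> B0 by (simp add: indicator_vec_def field_simps)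
    thus "ln (1 + indicator_vec S k * beta Th a g k k / (Bs S Th a g k + 1/2)) =
        ln (Bs S Th a g k + beta Th a g k k + 1/2) - ln (Bs S Th a g k + 1/2)"
      using B0 beta_ge0[of Th a g k k] by (simp add: ln_div)
  qed
  finally show ?thesis .
qed

theorem lemma4:
  fixes K :: nat and Theta :: "nat \<Rightarrow> nat \<Rightarrow> real"
    and S :: "nat set" and alpha gamma alpha' gamma' :: "nat \<Rightarrow> real"
  assumes "S \<subseteq> {1..K}" and "card S \<ge> 1"
    and "\<forall>k\<in>{1..K}. -pi \<le> alpha k \<and> alpha k < pi \<and> -pi \<le> gamma k \<and> gamma k < pi"
    and "\<forall>k\<in>{1..K}. -pi \<le> alpha' k \<and> alpha' k < pi \<and> -pi \<le> gamma' k \<and> gamma' k < pi"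
    and "\<forall>k\<in>S. max \<bar>alpha k - alpha' k\<bar> \<bar>gamma k - gamma' k\<bar> \<le> 1 / (2 * (real (card S))\<^sup>2)"
  shows "\<bar>R_sum K Theta (indicator_vec S) alpha gamma - R_sum K Theta (indicator_vec S) alpha' gamma'\<bar> \<le> 4"
proof -
  define s where "s = real (card S)"
  have fin: "finite S" using assms(1) finite_subset by blast
  have s1: "s \<ge> 1" using assms(2) by (simp add: s_def)
  define B where "B = Bs S Theta alpha gamma"
  define B' where "B' = Bs S Theta alpha' gamma'"
  define b where "b = beta Theta alpha gamma"
  define b' where "b' = beta Theta alpha' gamma'"
  have db: "\<bar>b k j - b' k j\<bar> \<le> 1 / s^2" if "k \<in> S" "j \<in> S" for k j
  proof -
    have "\<bar>b k j - b' k j\<bar> \<le> \<bar>(alpha j + Theta k j - Theta j j - gamma k) - (alpha' j + Theta k j - Theta j j - gamma' k)\<bar>"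
      unfolding b_def b'_def beta_def by (rule cos2_lip)
    also have "\<dots> \<le> \<bar>alpha j - alpha' j\<bar> + \<bar>gamma k - gamma' k\<bar>" by linarith
    also have "\<dots> \<le> 1 / (2 * s^2) + 1 / (2 * s^2)"
      using assms(5) that unfolding s_def by (intro add_mono) fastforce+
    also have "\<dots> = 1 / s^2" by simp
    finally show ?thesis .
  qed
  have sumbound: "\<bar>(\<Sum>j\<in>A. b k j) - (\<Sum>j\<in>A. b' k j)\<bar> \<le> 1 / s"
    if "k \<in> S" "A \<subseteq> S" for k A
  proof -
    have finA: "finite A" using fin that finite_subset by blast
    have "\<bar>(\<Sum>j\<in>A. b k j) - (\<Sum>j\<in>A. b' k j)\<bar> = \<bar>\<Sum>j\<in>A. b k j - b' k j\<bar>"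
      by (simp add: sum_subtractf)
    also have "\<dots> \<le> (\<Sum>j\<in>A. \<bar>b k j - b' k j\<bar>)" by (rule sum_abs)
    also have "\<dots> \<le> real (card A) * (1 / s^2)"
      by (rule sum_bounded_above) (use db that in auto)
    also have "\<dots> \<le> s * (1 / s^2)"
      unfolding s_def using card_mono[OF fin that(2)] by (intro mult_right_mono) auto
    also have "\<dots> = 1 / s" using s1 by (simp add: power2_eq_square)
    finally show ?thesis .
  qed
  have term_bound: "\<bar>(ln (B k + b k k + 1/2) - ln (B k + 1/2)) - (ln (B' k + b' k k + 1/2) - ln (B' k + 1/2))\<bar> \<le> 4 / s"
    if k: "k \<in> S" for k
  proof -
    have B0: "B k \<ge> 0" "B' k \<ge> 0" unfolding B_def B'_def Bs_def
      by (auto intro!: sum_nonneg simp: beta_ge0)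
    have bb: "b k k \<ge> 0" "b' k k \<ge> 0" unfolding b_def b'_def by (auto simp: beta_ge0)
    have sB: "B k + b k k = (\<Sum>j\<in>S. b k j)" "B' k + b' k k = (\<Sum>j\<in>S. b' k j)"
      unfolding B_def B'_def Bs_def b_def b'_def
      by (simp_all add: sum.remove[OF fin k])
    have d1: "\<bar>(B k + b k k) - (B' k + b' k k)\<bar> \<le> 1 / s"
      unfolding sB using sumbound[OF k] by simp
    have d2: "\<bar>B k - B' k\<bar> \<le> 1 / s"
      unfolding B_def B'_def Bs_def using sumbound[OF k, of "S - {k}"]
      by (simp add: b_def b'_def)
    have l1: "\<bar>ln (B k + b k k + 1/2) - ln (B' k + b' k k + 1/2)\<bar> \<le> 2 * (1 / s)"
    proof -
      have "\<bar>ln (B k + b k k + 1/2) - ln (B' k + b' k k + 1/2)\<bar> \<le> 2 * \<bar>(B k + b k k + 1/2) - (B' k + b' k k + 1/2)\<bar>"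
        using B0 bb by (intro ln_lip) auto
      also have "\<dots> \<le> 2 * (1/s)" using d1 by simp
      finally show ?thesis .
    qed
    have l2: "\<bar>ln (B k + 1/2) - ln (B' k + 1/2)\<bar> \<le> 2 * (1 / s)"
    proof -
      have "\<bar>ln (B k + 1/2) - ln (B' k + 1/2)\<bar> \<le> 2 * \<bar>(B k + 1/2) - (B' k + 1/2)\<bar>"
        using B0 by (intro ln_lip) auto
      also have "\<dots> \<le> 2 * (1/s)" using d2 by simp
      finally show ?thesis .
    qed
    show ?thesis using l1 l2 by (simp add: abs_le_iff)
  qed
  have "\<bar>R_sum K Theta (indicator_vec S) alpha gamma - R_sum K Theta (indicator_vec S) alpha' gamma'\<bar>
      = \<bar>\<Sum>k\<in>S. (ln (B k + b k k + 1/2) - ln (B k + 1/2)) - (ln (B' k + b' k k + 1/2) - ln (B' k + 1/2))\<bar>"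
    unfolding R_eq[OF assms(1)] B_def B'_def b_def b'_def by (simp add: sum_subtractf)
  also have "\<dots> \<le> (\<Sum>k\<in>S. \<bar>(ln (B k + b k k + 1/2) - ln (B k + 1/2)) - (ln (B' k + b' k k + 1/2) - ln (B' k + 1/2))\<bar>)"
    by (rule sum_abs)
  also have "\<dots> \<le> real (card S) * (4 / s)"
    by (rule sum_bounded_above) (use term_bound in auto)
  also have "\<dots> = 4" using s1 by (simp add: s_def)
  finally show ?thesis .
qed

end
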